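(* Let $\mathcal{X}$ be a finite set, let $\underline{T}$ be a lower transition operator on $\mathcal{L}(\mathcal{X})$ and let $(\underline{T}_n)_{n\in\mathbb{N}}$ be a sequence of lower transition operators on $\mathcal{L}(\mathcal{X})$. Then $\|\underline{T}_n-\underline{T}\|\to0$ if and only if $\underline{T}_nf\to\underline{T}f$ for every $f\in\mathcal{L}(\mathcal{X})$.
   Context: $\mathcal{L}(\mathcal{X})$ is the set of real-valued functions on $\mathcal{X}$ with the maximum norm $\|f\|=\max_{x}|f(x)|$. For non-negatively homogeneous operators $A\colon\mathcal{L}(\mathcal{X})\to\mathcal{L}(\mathcal{X})$ (i.e. $A(\lambda f)=\lambda Af$ for $\lambda\ge0$), $\|A\|\coloneqq\sup\{\|Af\|\colon\|f\|=1\}$. A lower transition operator is a map $\underline{T}\colon\mathcal{L}(\mathcal{X})\to\mathcal{L}(\mathcal{X})$ such that for all $f,g$ and $\lambda\ge0$: $\underline{T}f\ge\min f$ (pointwise); $\underline{T}(f+g)\ge\underline{T}f+\underline{T}g$; $\underline{T}(\lambda f)=\lambda\underline{T}f$. *)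

theory Defs
  imports Complex_Main
begin

definition fnorm :: "('x::finite \<Rightarrow> real) \<Rightarrow> real" where
  "fnorm f = Max (range (\<lambda>x. \<bar>f x\<bar>))"

definition opnorm :: "(('x::finite \<Rightarrow> real) \<Rightarrow> ('x \<Rightarrow> real)) \<Rightarrow> real" where
  "opnorm A = Sup {fnorm (A f) | f. fnorm f = 1}"

definition lower_transition_operator :: "(('x::finite \<Rightarrow> real) \<Rightarrow> ('x \<Rightarrow> real)) \<Rightarrow> bool" where
  "lower_transition_operator T \<longleftrightarrow>
     (\<forall>f x. T f x \<ge> Min (range f)) \<and>
     (\<forall>f g x. T (\<lambda>y. f y + g y) x \<ge> T f x + T g x) \<and>
     (\<forall>f (c::real). c \<ge> 0 \<longrightarrow> T (\<lambda>y. c * f y) = (\<lambda>x. c * T f x))"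

end

theory Submission
  imports Defs "HOL-Library.FuncSet"
begin

lemma fnorm_le_iff: "fnorm (f::'x::finite \<Rightarrow> real) \<le> e \<longleftrightarrow> (\<forall>x. \<bar>f x\<bar> \<le> e)"
  unfolding fnorm_def by (subst Max_le_iff) auto

lemma fnorm_ge: "\<bar>(f::'x::finite \<Rightarrow> real) x\<bar> \<le> fnorm f"
  unfolding fnorm_def by (rule Max_ge) auto

lemma fnorm_nonneg: "0 \<le> fnorm (f::'x::finite \<Rightarrow> real)"
  using fnorm_ge[of f undefined] by linarith

lemma fnorm_scale:
  assumes "(c::real) \<ge> 0"
  shows "fnorm (\<lambda>y. c * (f::'x::finite \<Rightarrow> real) y) = c * fnorm f"
proof -
  have "range (\<lambda>x. \<bar>c * f x\<bar>) = (\<lambda>t. c * t) ` range (\<lambda>x. \<bar>f x\<bar>)"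
    using assms by (auto simp: abs_mult)
  moreover have "mono (\<lambda>t. c * t)" using assms by (simp add: mono_def mult_left_mono)
  ultimately show ?thesis unfolding fnorm_def
    using mono_Max_commute[of "\<lambda>t. c * t" "range (\<lambda>x. \<bar>f x\<bar>)"] by simp
qed

context
  fixes T :: "('x::finite \<Rightarrow> real) \<Rightarrow> ('x \<Rightarrow> real)"
  assumes lto: "lower_transition_operator T"
begin

lemma lto_min: "T f x \<ge> Min (range f)"
  using lto unfolding lower_transition_operator_def by blast

lemma lto_add: "T (\<lambda>y. f y + g y) x \<ge> T f x + T g x"
  using lto unfolding lower_transition_operator_def by blast

lemma lto_hom: "c \<ge> 0 \<Longrightarrow> T (\<lambda>y. c * f y) = (\<lambda>x. c * T f x)"
  using lto unfolding lower_transition_operator_def by blast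

lemma lto_zero: "T (\<lambda>y. 0) x = 0"
  using lto_hom[of 0 "\<lambda>y. 0"] by (simp add: fun_eq_iff)

lemma lto_const: "T (\<lambda>y. c) x \<ge> c"
  using lto_min[of "\<lambda>y. c" x] by simp

lemma lto_const_add: "T (\<lambda>y. f y + c) x = T f x + c"
proof -
  have a: "T (\<lambda>y. f y + c) x \<ge> T f x + c"
    using lto_add[of f x "\<lambda>y. c"] lto_const[of c x] by linarith
  have "T (\<lambda>y. (f y + c) + (- c)) x \<ge> T (\<lambda>y. f y + c) x + T (\<lambda>y. - c) x"
    by (rule lto_add)
  hence "T f x \<ge> T (\<lambda>y. f y + c) x - c" using lto_const[of "-c" x] by simp
  with a show ?thesis by linarith
qed

lemma lto_mono: "(\<And>y. f y \<le> g y) \<Longrightarrow> T f x \<le> T g x"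
proof -
  assume h: "\<And>y. f y \<le> g y"
  have "T (\<lambda>y. f y + (g y - f y)) x \<ge> T f x + T (\<lambda>y. g y - f y) x" by (rule lto_add)
  moreover have "T (\<lambda>y. g y - f y) x \<ge> 0"
  proof -
    have "Min (range (\<lambda>y. g y - f y)) \<ge> 0" using h by (subst Min_ge_iff) auto
    thus ?thesis using lto_min[of "\<lambda>y. g y - f y" x] by linarith
  qed
  ultimately show ?thesis by simp
qed

lemma lto_lip1: "T f x - T g x \<le> fnorm (\<lambda>y. f y - g y)"
proof -
  let ?d = "fnorm (\<lambda>y. f y - g y)"
  have "\<And>y. f y \<le> g y + ?d"
  proof -
    fix y show "f y \<le> g y + ?d" using fnorm_ge[of "\<lambda>y. f y - g y" y] by (auto simp: abs_le_iff)
  qed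
  hence "T f x \<le> T (\<lambda>y. g y + ?d) x" by (rule lto_mono)
  thus ?thesis using lto_const_add[of g ?d x] by linarith
qed

lemma lto_lip: "\<bar>T f x - T g x\<bar> \<le> fnorm (\<lambda>y. f y - g y)"
proof -
  have "fnorm (\<lambda>y. g y - f y) = fnorm (\<lambda>y. f y - g y)"
    unfolding fnorm_def by (simp add: abs_minus_commute)
  thus ?thesis using lto_lip1[of f x g] lto_lip1[of g x f] by linarith
qed

end

lemma D_lip:
  assumes "lower_transition_operator T" "lower_transition_operator S"
  shows "\<bar>(S f x - T f x) - (S g x - T g x)\<bar> \<le> 2 * fnorm (\<lambda>y. f y - g y)"
  using lto_lip[OF assms(1), of f x g] lto_lip[OF assms(2), of f x g] by linarith

lemma D_bound:
  assumes "lower_transition_operator T" "lower_transition_operator S"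
  shows "fnorm (\<lambda>x. S f x - T f x) \<le> 2 * fnorm f"
  unfolding fnorm_le_iff
  using D_lip[OF assms, of f _ "\<lambda>y. 0"] lto_zero[OF assms(1)] lto_zero[OF assms(2)]
  by simp

lemma opnorm_set_bdd:
  assumes "lower_transition_operator T" "lower_transition_operator S"
  shows "bdd_above {fnorm (\<lambda>x. S f x - T f x) | f. fnorm f = (1::real)}"
  unfolding bdd_above_def
proof (intro exI[of _ 2] ballI)
  fix v assume "v \<in> {fnorm (\<lambda>x. S f x - T f x) | f. fnorm f = (1::real)}"
  then obtain f where "fnorm f = 1" "v = fnorm (\<lambda>x. S f x - T f x)" by blast
  thus "v \<le> 2" using D_bound[OF assms, of f] by simp
qed

lemma fnorm_one: "fnorm (\<lambda>y::'x::finite. 1::real) = 1"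
  unfolding fnorm_def by simp

lemma opnorm_nonneg:
  assumes "lower_transition_operator T" "lower_transition_operator (S::('x::finite \<Rightarrow> real) \<Rightarrow> _)"
  shows "0 \<le> opnorm (\<lambda>f x. S f x - T f x)"
proof -
  have "fnorm (\<lambda>x. S (\<lambda>y. 1) x - T (\<lambda>y. 1) x) \<le> opnorm (\<lambda>f x. S f x - T f x)"
    unfolding opnorm_def using fnorm_one
    by (intro cSup_upper opnorm_set_bdd[OF assms]) auto
  thus ?thesis using fnorm_nonneg by (meson order_trans)
qed

lemma opnorm_bound:
  assumes "lower_transition_operator T" "lower_transition_operator (S::('x::finite \<Rightarrow> real) \<Rightarrow> _)"
  shows "fnorm (\<lambda>x. S f x - T f x) \<le> opnorm (\<lambda>f x. S f x - T f x) * fnorm f"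
proof (cases "fnorm f = 0")
  case True
  hence "f = (\<lambda>y. 0)" using fnorm_ge[of f] by (auto simp: fun_eq_iff)
  thus ?thesis using lto_zero[OF assms(1)] lto_zero[OF assms(2)] by (simp add: fnorm_def)
next
  case False
  define a where "a = fnorm f"
  have a: "a > 0" using False fnorm_nonneg[of f] unfolding a_def by linarith
  define h where "h = (\<lambda>y. f y / a)"
  have fh: "f = (\<lambda>y. a * h y)" using a by (auto simp: h_def fun_eq_iff)
  have "fnorm h = 1"
  proof -
    have "fnorm f = a * fnorm h" using fnorm_scale[of a h] a by (simp add: fh)
    hence "a * fnorm h = a * 1" unfolding a_def by simp
    thus ?thesis using a by (metis mult_left_cancel less_irrefl)
  qed
  hence le: "fnorm (\<lambda>x. S h x - T h x) \<le> opnorm (\<lambda>f x. S f x - T f x)"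
    unfolding opnorm_def by (intro cSup_upper opnorm_set_bdd[OF assms]) auto
  have "(\<lambda>x. S f x - T f x) = (\<lambda>x. a * (S h x - T h x))"
    unfolding fh using lto_hom[OF assms(1), of a h] lto_hom[OF assms(2), of a h] a
    by (simp add: right_diff_distrib)
  hence "fnorm (\<lambda>x. S f x - T f x) = a * fnorm (\<lambda>x. S h x - T h x)"
    using fnorm_scale[of a] a by simp
  also have "\<dots> \<le> a * opnorm (\<lambda>f x. S f x - T f x)" using le a by simp
  finally show ?thesis by (simp add: a_def mult.commute)
qed

lemma finite_grid:
  "finite {g :: 'x::finite \<Rightarrow> real. \<forall>x. g x \<in> S} \<longleftrightarrow> True" if "finite S"
proof -
  have "{g :: 'x \<Rightarrow> real. \<forall>x. g x \<in> S} = Pi\<^sub>E UNIV (\<lambda>_. S)"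
    by (auto simp: PiE_UNIV_domain Pi_def)
  thus ?thesis using that by (simp add: finite_PiE)
qed

theorem proposition1:
  fixes T :: "('x::finite \<Rightarrow> real) \<Rightarrow> ('x \<Rightarrow> real)"
    and Tn :: "nat \<Rightarrow> ('x \<Rightarrow> real) \<Rightarrow> ('x \<Rightarrow> real)"
  assumes "lower_transition_operator T"
    and "\<And>n. lower_transition_operator (Tn n)"
  shows "(\<lambda>n. opnorm (\<lambda>f x. Tn n f x - T f x)) \<longlonglongrightarrow> 0 \<longleftrightarrow>
         (\<forall>f. (\<lambda>n. fnorm (\<lambda>x. Tn n f x - T f x)) \<longlonglongrightarrow> 0)"
proof
  assume L: "(\<lambda>n. opnorm (\<lambda>f x. Tn n f x - T f x)) \<longlonglongrightarrow> 0"
  show "\<forall>f. (\<lambda>n. fnorm (\<lambda>x. Tn n f x - T f x)) \<longlonglongrightarrow> 0"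
  proof
    fix f :: "'x \<Rightarrow> real"
    let ?h = "\<lambda>n. opnorm (\<lambda>f x. Tn n f x - T f x) * fnorm f"
    have H: "?h \<longlonglongrightarrow> 0"
      using tendsto_mult[OF L tendsto_const[of "fnorm f"]] by simp
    have B: "\<And>n. fnorm (\<lambda>x. Tn n f x - T f x) \<le> ?h n"
      by (rule opnorm_bound[OF assms(1) assms(2)])
    have Z: "\<And>n. 0 \<le> fnorm (\<lambda>x. Tn n f x - T f x)"
      by (rule fnorm_nonneg)
    show "(\<lambda>n. fnorm (\<lambda>x. Tn n f x - T f x)) \<longlonglongrightarrow> 0"
      by (rule tendsto_sandwich[OF always_eventually always_eventually tendsto_const H])
         (use B Z in blast)+
  qed
next
  assume R: "\<forall>f. (\<lambda>n. fnorm (\<lambda>x. Tn n f x - T f x)) \<longlonglongrightarrow> 0"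
  show "(\<lambda>n. opnorm (\<lambda>f x. Tn n f x - T f x)) \<longlonglongrightarrow> 0"
  proof (rule LIMSEQ_I)
    fix e :: real assume e: "e > 0"
    define \<epsilon> where "\<epsilon> = e / 4"
    have ep: "\<epsilon> > 0" using e by (simp add: \<epsilon>_def)
    define N where "N = ceiling (1 / \<epsilon>) + 1"
    define S where "S = (\<lambda>k. \<epsilon> * of_int k) ` {-N..N}"
    define G where "G = {g :: 'x \<Rightarrow> real. \<forall>x. g x \<in> S}"
    have finG: "finite G" unfolding G_def S_def by (simp add: finite_grid)
    define rd where "rd = (\<lambda>f::'x \<Rightarrow> real. \<lambda>x. \<epsilon> * of_int (round (f x / \<epsilon>)))"
    have rd_close: "fnorm (\<lambda>y. f y - rd f y) \<le> \<epsilon> / 2" for f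
      unfolding fnorm_le_iff
    proof
      fix x
      have "\<bar>of_int (round (f x / \<epsilon>)) - f x / \<epsilon>\<bar> \<le> 1/2" by (rule of_int_round_abs_le)
      hence "\<epsilon> * \<bar>of_int (round (f x / \<epsilon>)) - f x / \<epsilon>\<bar> \<le> \<epsilon> * (1/2)" using ep
        by (intro mult_left_mono) auto
      moreover have "f x - rd f x = \<epsilon> * (f x / \<epsilon> - of_int (round (f x / \<epsilon>)))"
        using ep by (simp add: rd_def field_simps)
      hence "\<bar>f x - rd f x\<bar> = \<epsilon> * \<bar>of_int (round (f x / \<epsilon>)) - f x / \<epsilon>\<bar>"
        using ep by (simp add: abs_mult abs_minus_commute)
      ultimately show "\<bar>f x - rd f x\<bar> \<le> \<epsilon> / 2" by simp
    qed
    have rdG: "rd f \<in> G" if "fnorm f = 1" for f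
      unfolding G_def S_def
    proof (intro CollectI allI)
      fix x
      let ?k = "round (f x / \<epsilon>)"
      have "\<bar>f x\<bar> \<le> 1" using fnorm_ge[of f x] that by simp
      hence "\<bar>f x / \<epsilon>\<bar> \<le> 1 / \<epsilon>" using ep by (simp add: divide_right_mono abs_divide)
      moreover have "1 / \<epsilon> \<le> of_int (ceiling (1 / \<epsilon>))" by (rule le_of_int_ceiling)
      moreover have "\<bar>of_int ?k - f x / \<epsilon>\<bar> \<le> 1/2" by (rule of_int_round_abs_le)
      moreover have gen: "\<And>(k::real) t c. \<bar>t\<bar> \<le> c \<Longrightarrow> \<bar>k - t\<bar> \<le> 1/2 \<Longrightarrow> \<bar>k\<bar> < c + 1"
        by (simp only: abs_le_iff abs_less_iff) linarith
      ultimately have "\<bar>real_of_int ?k\<bar> < of_int (ceiling (1 / \<epsilon>)) + 1"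
        by (meson order_trans)
      hence "\<bar>?k\<bar> < N" unfolding N_def by linarith
      hence "?k \<in> {-N..N}" by auto
      thus "rd f x \<in> (\<lambda>k. \<epsilon> * of_int k) ` {-N..N}" unfolding rd_def by auto
    qed
    have ev: "eventually (\<lambda>n. \<forall>g\<in>G. fnorm (\<lambda>x. Tn n g x - T g x) < \<epsilon>) sequentially"
    proof (rule eventually_ball_finite[OF finG], intro ballI)
      fix g assume "g \<in> G"
      have "(\<lambda>n. fnorm (\<lambda>x. Tn n g x - T g x)) \<longlonglongrightarrow> 0" using R by blast
      from order_tendstoD(2)[OF this ep]
      show "eventually (\<lambda>n. fnorm (\<lambda>x. Tn n g x - T g x) < \<epsilon>) sequentially" .
    qed
    then obtain M where M: "\<And>n. n \<ge> M \<Longrightarrow> \<forall>g\<in>G. fnorm (\<lambda>x. Tn n g x - T g x) < \<epsilon>"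
      unfolding eventually_sequentially by blast
    show "\<exists>no. \<forall>n\<ge>no. norm (opnorm (\<lambda>f x. Tn n f x - T f x) - 0) < e"
    proof (intro exI allI impI)
      fix n assume n: "n \<ge> M"
      have "opnorm (\<lambda>f x. Tn n f x - T f x) \<le> 2 * \<epsilon>"
        unfolding opnorm_def
      proof (rule cSup_least)
        show "{fnorm (\<lambda>x. Tn n f x - T f x) |f. fnorm f = 1} \<noteq> {}"
          using fnorm_one by blast
      next
        fix v assume "v \<in> {fnorm (\<lambda>x. Tn n f x - T f x) |f. fnorm f = 1}"
        then obtain f where f: "fnorm f = 1" and v: "v = fnorm (\<lambda>x. Tn n f x - T f x)" by blast
        have g: "fnorm (\<lambda>x. Tn n (rd f) x - T (rd f) x) < \<epsilon>" using M[OF n] rdG[OF f] by blast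
        have "fnorm (\<lambda>x. Tn n f x - T f x) \<le> 2 * \<epsilon>"
          unfolding fnorm_le_iff
        proof
          fix x
          have "\<bar>(Tn n f x - T f x) - (Tn n (rd f) x - T (rd f) x)\<bar> \<le> 2 * fnorm (\<lambda>y. f y - rd f y)"
            by (rule D_lip[OF assms(1) assms(2)])
          moreover have "\<bar>Tn n (rd f) x - T (rd f) x\<bar> \<le> fnorm (\<lambda>x. Tn n (rd f) x - T (rd f) x)"
            by (rule fnorm_ge)
          ultimately show "\<bar>Tn n f x - T f x\<bar> \<le> 2 * \<epsilon>" using g rd_close[of f] by linarith
        qed
        thus "v \<le> 2 * \<epsilon>" using v by simp
      qed
      moreover have "0 \<le> opnorm (\<lambda>f x. Tn n f x - T f x)" by (rule opnorm_nonneg[OF assms(1) assms(2)])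
      ultimately show "norm (opnorm (\<lambda>f x. Tn n f x - T f x) - 0) < e"
        using e unfolding \<epsilon>_def by simp
    qed
  qed
qed

end
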